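(* In the streaming PCA setting, let $\{\hat{\bm v}_t\}$ be produced by either the Oja update or the Krasulina–Oja update, and let $L_t:=\sin^2(\hat{\bm v}_t,\bm v_1)$. Then for all $t\ge1$, almost surely, $$L_t\le\begin{cases}(1-2\rho\eta_t)L_{t-1}+2\rho\eta_tL_{t-1}^2+Q_t+4B^4\eta_t^2 & \text{(Krasulina–Oja)},\\ (1-2\rho\eta_t)L_{t-1}+2\rho\eta_tL_{t-1}^2+Q_t+(5B^4+2\eta_tB^6)\eta_t^2 & \text{(Oja)},\end{cases}$$ where $Q_t$ is an $\mathcal F_t$-measurable random variable satisfying $\mathbb E(Q_t\mid\mathcal F_{t-1})=0$ and $|Q_t|\le8B^2\eta_t\sqrt{L_{t-1}}$.
   Context: Streaming PCA setting: $\bm X_1,\bm X_2,\dots\in\mathbb R^p$ are i.i.d. centered random vectors with covariance matrix $\bm\Sigma$, and $\|\bm X_i\|\le B$ almost surely. The eigenvalues of $\bm\Sigma$ in decreasing order are $\lambda_1>\lambda_2\ge\dots\ge\lambda_p$, $\bm v_1$ is a unit eigenvector for $\lambda_1$, and $\rho:=\lambda_1-\lambda_2$ is the eigengap. $\hat{\bm v}_0$ is a random unit vector independent of $(\bm X_t)$ (e.g. uniform on the sphere). $\{\eta_t\}_{t\ge1}$ are deterministic positive step sizes. Oja update: $\hat{\bm v}_t=(\bm I_p+\eta_t\bm X_t\bm X_t^\top)\hat{\bm v}_{t-1}$, followed by normalization $\hat{\bm v}_t\leftarrow\hat{\bm v}_t/\|\hat{\bm v}_t\|$. Krasulina–Oja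 update: with $y_t:=\bm X_t^\top\hat{\bm v}_{t-1}$, $\hat{\bm v}_t=\hat{\bm v}_{t-1}+\eta_t\,y_t\big[\bm X_t-\frac{y_t}{\|\hat{\bm v}_{t-1}\|^2}\hat{\bm v}_{t-1}\big]$. For non-zero $\bm x,\bm y$, $\sin^2(\bm x,\bm y):=1-\frac{\langle\bm x,\bm y\rangle^2}{\|\bm x\|^2\|\bm y\|^2}$. $\mathcal F_t:=\sigma(\hat{\bm v}_0,\bm X_1,\dots,\bm X_t)$. *)

theory Defs
  imports "HOL-Probability.Probability"
begin

definition sin2 :: "real^'p \<Rightarrow> real^'p \<Rightarrow> real" where
  "sin2 x y = 1 - (x \<bullet> y)\<^sup>2 / ((norm x)\<^sup>2 * (norm y)\<^sup>2)"

definition oja_step :: "real \<Rightarrow> real^'p \<Rightarrow> real^'p \<Rightarrow> real^'p" where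
  "oja_step eta x v = (let w = v + (eta * (x \<bullet> v)) *\<^sub>R x in w /\<^sub>R norm w)"

definition kras_step :: "real \<Rightarrow> real^'p \<Rightarrow> real^'p \<Rightarrow> real^'p" where
  "kras_step eta x v = (let y = x \<bullet> v in v + (eta * y) *\<^sub>R (x - (y / (norm v)\<^sup>2) *\<^sub>R v))"

text \<open>Iterates: index 0 is the initial vector, the t-th iterate uses eta t and X t (t >= 1).\<close>
primrec oja_iter :: "(nat \<Rightarrow> real) \<Rightarrow> (nat \<Rightarrow> 'a \<Rightarrow> real^'p) \<Rightarrow> ('a \<Rightarrow> real^'p)
    \<Rightarrow> nat \<Rightarrow> 'a \<Rightarrow> real^'p" where
  "oja_iter eta X v0 0 \<omega> = v0 \<omega>"
| "oja_iter eta X v0 (Suc t) \<omega> = oja_step (eta (Suc t)) (X (Suc t) \<omega>) (oja_iter eta X v0 t \<omega>)"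

primrec kras_iter :: "(nat \<Rightarrow> real) \<Rightarrow> (nat \<Rightarrow> 'a \<Rightarrow> real^'p) \<Rightarrow> ('a \<Rightarrow> real^'p)
    \<Rightarrow> nat \<Rightarrow> 'a \<Rightarrow> real^'p" where
  "kras_iter eta X v0 0 \<omega> = v0 \<omega>"
| "kras_iter eta X v0 (Suc t) \<omega> = kras_step (eta (Suc t)) (X (Suc t) \<omega>) (kras_iter eta X v0 t \<omega>)"

text \<open>Natural filtration F_t = sigma(v0, X_1, ..., X_t), where Z 0 = v0 and Z i = X i for i >= 1.\<close>
definition nat_filtration :: "'a measure \<Rightarrow> (nat \<Rightarrow> 'a \<Rightarrow> real^'p) \<Rightarrow> nat \<Rightarrow> 'a measure" where
  "nat_filtration M Z t =
     sigma (space M) (\<Union>i\<in>{..t}. {Z i -` A \<inter> space M | A. A \<in> sets (borel :: (real^'p) measure)})"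

text \<open>lam 0 >= lam 1 >= ... >= lam (p-1) are the eigenvalues of S in decreasing order
  (with multiplicity): there is an orthonormal eigenbasis u 0, ..., u (p-1) with
  S u i = lam i u i. (Indices are 0-based: lam 0 = lambda_1, lam 1 = lambda_2.)\<close>
definition ordered_eigenvalues :: "real^'p^'p \<Rightarrow> (nat \<Rightarrow> real) \<Rightarrow> bool" where
  "ordered_eigenvalues S lam \<longleftrightarrow>
     (\<exists>u :: nat \<Rightarrow> real^'p.
        (\<forall>i<CARD('p). \<forall>j<CARD('p). u i \<bullet> u j = (if i = j then 1 else 0)) \<and>
        (\<forall>i<CARD('p). S *v u i = lam i *\<^sub>R u i) \<and>
        (\<forall>i j. i \<le> j \<longrightarrow> j < CARD('p) \<longrightarrow> lam j \<le> lam i))"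

end

theory Submission
  imports Defs
begin


lemma sin2_scale:
  fixes v w :: "real^'p"
  assumes "k \<noteq> 0"
  shows "sin2 (k *\<^sub>R v) w = sin2 v w"
  using assms by (simp add: sin2_def power_mult_distrib power2_abs)

lemma sin2_unit:
  fixes u v1 :: "real^'p"
  assumes "norm v1 = 1" "u \<noteq> 0"
  shows "sin2 u v1 = (norm u ^ 2 - (u \<bullet> v1)^2) / (norm u)^2"
  using assms by (auto simp: sin2_def field_simps)

lemma inner_sq_le: fixes u v1 :: "real^'p" assumes "norm v1 = 1"
  shows "(u \<bullet> v1)^2 \<le> (norm u)^2"
  using Cauchy_Schwarz_ineq2[of u v1] assms
    by (metis mult.right_neutral norm_ge_zero real_sqrt_abs real_sqrt_le_iff abs_of_nonneg)

lemma sin2_ge0: fixes u v1 :: "real^'p" assumes "norm v1 = 1" shows "0 \<le> sin2 u v1"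
proof (cases "u = 0")
  case True then show ?thesis by (simp add: sin2_def)
next
  case False
  then show ?thesis using sin2_unit[OF assms False] inner_sq_le[OF assms, of u] by simp
qed

lemma sin2_le1: fixes u v1 :: "real^'p" shows "sin2 u v1 \<le> 1"
  by (simp add: sin2_def)

lemma kras_unit:
  fixes u v1 x :: "real^'p"
  assumes u: "norm u = 1" and v1: "norm v1 = 1" and x: "norm x \<le> B" and eta: "eta > 0"
  defines "c \<equiv> u \<bullet> v1" and "y \<equiv> x \<bullet> u"
  shows "sin2 (u + (eta * y) *\<^sub>R (x - y *\<^sub>R u)) v1
          \<le> sin2 u v1 + 2 * eta * (c^2 * y^2 - c * y * (x \<bullet> v1)) + eta^2 * B^4"
proof -
  define w where "w = u + (eta * y) *\<^sub>R (x - y *\<^sub>R u)"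
  define x1 where "x1 = x \<bullet> v1"
  have uu: "u \<bullet> u = 1" using u by (simp add: dot_square_norm)
  have P: "w \<bullet> v1 = c + eta * y * (x1 - y * c)"
    by (simp add: w_def c_def x1_def inner_add_left inner_diff_left algebra_simps)
  have ux: "u \<bullet> x = y" by (simp add: y_def inner_commute)
  have Nm: "(norm w)^2 = 1 + eta^2 * y^2 * (x \<bullet> x - y^2)"
    unfolding power2_norm_eq_inner w_def
    by (simp add: inner_add_left inner_add_right inner_diff_left inner_diff_right uu ux
        inner_commute[of x u] algebra_simps power2_eq_square)
  have yB: "y^2 \<le> B^2"
  proof -
    have "\<bar>y\<bar> \<le> norm x * norm u" unfolding y_def by (rule Cauchy_Schwarz_ineq2)
    then have "\<bar>y\<bar> \<le> B" using u x by simp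
    from power_mono[OF this abs_ge_zero, of 2] show ?thesis by simp
  qed
  have xx: "x \<bullet> x \<le> B^2" using x by (simp add: dot_square_norm power_mono)
  have s0: "0 \<le> x \<bullet> x - y^2"
  proof -
    have "\<bar>y\<bar> \<le> norm x * norm u" unfolding y_def by (rule Cauchy_Schwarz_ineq2)
    then have "\<bar>y\<bar> \<le> norm x" using u by simp
    from power_mono[OF this abs_ge_zero, of 2] have "y^2 \<le> (norm x)^2" by simp
    then show ?thesis by (simp add: dot_square_norm)
  qed
  have B0: "0 \<le> B" using x norm_ge_zero order_trans by blast
  have rem: "eta^2 * y^2 * (x \<bullet> x - y^2) \<le> eta^2 * B^4"
  proof -
    have "y^2 * (x \<bullet> x - y^2) \<le> B^2 * B^2"
      proof (rule mult_mono)
      show "x \<bullet> x - y^2 \<le> B^2" using xx zero_le_power2[of y] by linarith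
    qed (use yB s0 in auto)
    from mult_left_mono[OF this, of "eta^2"] show ?thesis
      by (simp add: power4_eq_xxxx power2_eq_square mult.assoc)
  qed
  have N1: "1 \<le> (norm w)^2" using Nm s0 by simp
  have wne: "w \<noteq> 0" using N1 by auto
  have CS: "(w \<bullet> v1)^2 \<le> (norm w)^2" by (rule inner_sq_le[OF v1])
  have "sin2 w v1 = ((norm w)^2 - (w \<bullet> v1)^2) / (norm w)^2" by (rule sin2_unit[OF v1 wne])
  also have "\<dots> \<le> (norm w)^2 - (w \<bullet> v1)^2"
    using N1 CS by (simp add: divide_le_eq_1 divide_le_eq mult_le_cancel_left1)
  also have "\<dots> = (1 - c^2) + 2 * eta * (c^2 * y^2 - c * y * x1) + eta^2 * y^2 * (x \<bullet> x - y^2)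
                  - eta^2 * y^2 * (x1 - y * c)^2"
    unfolding Nm P by (simp add: algebra_simps power2_eq_square)
  also have "\<dots> \<le> (1 - c^2) + 2 * eta * (c^2 * y^2 - c * y * x1) + eta^2 * B^4"
    using rem by (smt (verit) zero_le_power2 mult_nonneg_nonneg)
  also have "1 - c^2 = sin2 u v1" using u v1 by (simp add: sin2_def c_def)
  finally show ?thesis by (simp add: w_def x1_def)
qed

lemma unit_facts:
  fixes u v1 x :: "real^'p"
  assumes u: "norm u = 1" and v1: "norm v1 = 1" and x: "norm x \<le> B"
  shows "(x \<bullet> u)^2 \<le> B^2" "x \<bullet> x \<le> B^2" "(u \<bullet> v1)^2 \<le> 1" "0 \<le> B"
    "\<bar>x \<bullet> u\<bar> \<le> B" "\<bar>u \<bullet> v1\<bar> \<le> 1" "sin2 u v1 = 1 - (u \<bullet> v1)^2"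
proof -
  have B0: "0 \<le> B" using x norm_ge_zero order_trans by blast
  then show "0 \<le> B" .
  have "\<bar>x \<bullet> u\<bar> \<le> norm x * norm u" by (rule Cauchy_Schwarz_ineq2)
  then show "\<bar>x \<bullet> u\<bar> \<le> B" using u x by simp
  from power_mono[OF this abs_ge_zero, of 2] show "(x \<bullet> u)^2 \<le> B^2" by simp
  show "x \<bullet> x \<le> B^2" using x by (simp add: dot_square_norm power_mono)
  have "\<bar>u \<bullet> v1\<bar> \<le> norm u * norm v1" by (rule Cauchy_Schwarz_ineq2)
  then show c1: "\<bar>u \<bullet> v1\<bar> \<le> 1" using u v1 by simp
  from power_mono[OF this abs_ge_zero, of 2] show "(u \<bullet> v1)^2 \<le> 1" by simp
  show "sin2 u v1 = 1 - (u \<bullet> v1)^2" using u v1 by (simp add: sin2_def)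
qed

lemma dterm_bound:
  fixes u v1 x :: "real^'p"
  assumes u: "norm u = 1" and v1: "norm v1 = 1" and x: "norm x \<le> B" and eta: "eta > 0"
  defines "c \<equiv> u \<bullet> v1" and "y \<equiv> x \<bullet> u"
  shows "\<bar>2 * eta * (c^2 * y^2 - c * y * (x \<bullet> v1))\<bar> \<le> 2 * eta * B^2 * sqrt (sin2 u v1)"
proof -
  note f = unit_facts[OF u v1 x]
  have L: "sin2 u v1 = 1 - c^2" using f c_def by simp
  have e: "c^2 * y^2 - c * y * (x \<bullet> v1) = - (c * y) * (x \<bullet> (v1 - c *\<^sub>R u))"
    by (simp add: inner_diff_right y_def algebra_simps power2_eq_square)
  have uu: "u \<bullet> u = 1" "v1 \<bullet> v1 = 1" using u v1 by (simp_all add: dot_square_norm)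
  have ii: "(v1 - c *\<^sub>R u) \<bullet> (v1 - c *\<^sub>R u) = 1 - c^2"
    by (simp add: inner_diff_left inner_diff_right uu c_def inner_commute[of v1 u] power2_eq_square)
  have nn: "(norm (v1 - c *\<^sub>R u))^2 = 1 - c^2"
    unfolding power2_norm_eq_inner by (rule ii)
  have s: "sin2 u v1 = (norm (v1 - c *\<^sub>R u))^2" using nn L by simp
  have n2: "norm (v1 - c *\<^sub>R u) = sqrt (sin2 u v1)" by (simp add: s)
  have "\<bar>x \<bullet> (v1 - c *\<^sub>R u)\<bar> \<le> norm x * norm (v1 - c *\<^sub>R u)" by (rule Cauchy_Schwarz_ineq2)
  also have "\<dots> \<le> B * sqrt (sin2 u v1)" unfolding n2 by (rule mult_right_mono[OF x]) (simp add: sin2_ge0[OF v1])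
  finally have h1: "\<bar>x \<bullet> (v1 - c *\<^sub>R u)\<bar> \<le> B * sqrt (sin2 u v1)" .
  have h2: "\<bar>c * y\<bar> \<le> 1 * B" unfolding abs_mult
    by (rule mult_mono) (use f c_def y_def in auto)
  have "\<bar>c^2 * y^2 - c * y * (x \<bullet> v1)\<bar> = \<bar>c * y\<bar> * \<bar>x \<bullet> (v1 - c *\<^sub>R u)\<bar>"
    unfolding e by (simp add: abs_mult)
  also have "\<dots> \<le> B * (B * sqrt (sin2 u v1))"
    by (rule mult_mono) (use h1 h2 in auto)
  finally have "\<bar>c^2 * y^2 - c * y * (x \<bullet> v1)\<bar> \<le> B^2 * sqrt (sin2 u v1)"
    by (simp add: power2_eq_square mult.assoc)
  from mult_left_mono[OF this, of "2*eta"] eta show ?thesis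
    by (simp add: abs_mult mult.assoc)
qed

lemma oja_unit:
  fixes u v1 x :: "real^'p"
  assumes u: "norm u = 1" and v1: "norm v1 = 1" and x: "norm x \<le> B" and eta: "eta > 0"
  defines "c \<equiv> u \<bullet> v1" and "y \<equiv> x \<bullet> u"
  shows "sin2 (oja_step eta x u) v1
          \<le> sin2 u v1 + 2 * eta * (c^2 * y^2 - c * y * (x \<bullet> v1)) + (5 * B^4 + 2 * eta * B^6) * eta^2"
proof -
  note f = unit_facts[OF u v1 x]
  define w where "w = u + (eta * y) *\<^sub>R x"
  define x1 where "x1 = x \<bullet> v1"
  define L where "L = 1 - c^2"
  define D where "D = 2 * eta * (c^2 * y^2 - c * y * x1)"
  define a where "a = 2 * eta * y^2 + eta^2 * y^2 * (x \<bullet> x)"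
  define R where "R = (5 * B^4 + 2 * eta * B^6) * eta^2"
  have Lsin: "sin2 u v1 = L" using f c_def L_def by simp
  have B0: "0 \<le> B" using f by simp
  have uu: "u \<bullet> u = 1" using u by (simp add: dot_square_norm)
  have ux: "u \<bullet> x = y" by (simp add: y_def inner_commute)
  have P: "w \<bullet> v1 = c + eta * y * x1"
    by (simp add: w_def c_def x1_def inner_add_left algebra_simps)
  have Nm: "(norm w)^2 = 1 + a"
    unfolding power2_norm_eq_inner w_def a_def
    by (simp add: inner_add_left inner_add_right uu ux inner_commute[of x u] algebra_simps power2_eq_square)
  have a0: "0 \<le> a" unfolding a_def using eta by (simp add: inner_ge_zero)
  have yB: "y^2 \<le> B^2" "x \<bullet> x \<le> B^2" "c^2 \<le> 1" using f y_def c_def by auto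
  have yxB: "y^2 * (x \<bullet> x) \<le> B^2 * B^2"
    by (rule mult_mono) (use yB in \<open>auto simp: inner_ge_zero\<close>)
  have aB: "a \<le> 2 * eta * B^2 + eta^2 * (B^2 * B^2)"
  proof -
    have "2 * eta * y^2 \<le> 2 * eta * B^2" using yB eta by simp
    moreover have "eta^2 * (y^2 * (x \<bullet> x)) \<le> eta^2 * (B^2 * B^2)"
      using yxB by (simp add: mult_left_mono)
    ultimately show ?thesis unfolding a_def by (simp add: mult.assoc)
  qed
  have Db: "\<bar>D\<bar> \<le> 2 * eta * B^2 * sqrt L"
    using dterm_bound[OF u v1 x eta] unfolding D_def x1_def c_def y_def Lsin .
  have L01: "0 \<le> L" "L \<le> 1" using yB L_def by auto
  have sq1: "sqrt L \<le> 1" using L01 by simp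
  have "B^2 * sqrt L \<le> B^2" using mult_left_mono[OF sq1, of "B^2"] by simp
  from mult_left_mono[OF this, of "2*eta"] eta have "2 * eta * (B^2 * sqrt L) \<le> 2 * eta * B^2" by simp
  moreover have "2 * eta * B^2 * sqrt L = 2 * eta * (B^2 * sqrt L)" by (simp add: mult.assoc)
  ultimately have Db1: "\<bar>D\<bar> \<le> 2 * eta * B^2" using Db by linarith
  have key: "(norm w)^2 - (w \<bullet> v1)^2 - (1 + a) * (L + D) = eta^2 * y^2 * ((x \<bullet> x) * c^2 - x1^2) - a * D"
    unfolding Nm P a_def L_def D_def by (simp add: algebra_simps power2_eq_square)
  have t1: "eta^2 * y^2 * ((x \<bullet> x) * c^2 - x1^2) \<le> eta^2 * (B^2 * B^2)"
  proof -
    have "(x \<bullet> x) * c^2 - x1^2 \<le> (x \<bullet> x)"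
      using mult_left_mono[OF yB(3), of "x \<bullet> x"] by (simp add: inner_ge_zero) (smt (verit) zero_le_power2)
    then have "y^2 * ((x \<bullet> x) * c^2 - x1^2) \<le> y^2 * (x \<bullet> x)" by (simp add: mult_left_mono)
    also have "\<dots> \<le> B^2 * B^2" by (rule yxB)
    finally show ?thesis using mult_left_mono[of _ _ "eta^2"] by (simp add: mult.assoc)
  qed
  have t2: "- (a * D) \<le> (2 * eta * B^2 + eta^2 * (B^2 * B^2)) * (2 * eta * B^2)"
  proof -
    have "- (a * D) \<le> a * \<bar>D\<bar>" using a0 by (smt (verit) abs_mult abs_of_nonneg abs_ge_self abs_minus_cancel)
    also have "\<dots> \<le> (2 * eta * B^2 + eta^2 * (B^2 * B^2)) * (2 * eta * B^2)"
      by (rule mult_mono) (use aB Db1 a0 in auto)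
    finally show ?thesis .
  qed
  have Rv: "eta^2 * (B^2 * B^2) + (2 * eta * B^2 + eta^2 * (B^2 * B^2)) * (2 * eta * B^2) = R"
    unfolding R_def by (simp add: algebra_simps power2_eq_square power4_eq_xxxx)
    (simp add: numeral_eq_Suc)
  have R0: "0 \<le> R" unfolding R_def using eta B0 by simp
  have main: "(norm w)^2 - (w \<bullet> v1)^2 \<le> (1 + a) * (L + D) + R"
    using key t1 t2 Rv by linarith
  have N1: "1 \<le> (norm w)^2" using Nm a0 by simp
  have wne: "w \<noteq> 0" using N1 by auto
  have "oja_step eta x u = (1 / norm w) *\<^sub>R w"
    by (simp add: oja_step_def w_def y_def inner_commute Let_def inverse_eq_divide)
  then have "sin2 (oja_step eta x u) v1 = sin2 w v1" using wne by (simp add: sin2_scale)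
  also have "\<dots> = ((norm w)^2 - (w \<bullet> v1)^2) / (norm w)^2" by (rule sin2_unit[OF v1 wne])
  also have "\<dots> \<le> ((1 + a) * (L + D) + R) / (1 + a)"
    using main Nm N1 by (simp add: divide_right_mono)
  also have "\<dots> = (L + D) + R / (1 + a)" using a0 by (simp add: field_simps)
  also have "\<dots> \<le> L + D + R"
    using R0 a0 by (simp add: divide_le_eq) (simp add: mult_left_mono add_increasing2 algebra_simps)
  finally show ?thesis unfolding Lsin D_def R_def x1_def by simp
qed

definition dterm :: "real^'p \<Rightarrow> real \<Rightarrow> real^'p \<Rightarrow> real^'p \<Rightarrow> real" where
  "dterm v1 eta x v = (let u = (1 / norm v) *\<^sub>R v; c = u \<bullet> v1; y = x \<bullet> u in
     2 * eta * (c^2 * y^2 - c * y * (x \<bullet> v1)))"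

definition acoef :: "real^'p \<Rightarrow> real \<Rightarrow> real^'p \<Rightarrow> 'p \<Rightarrow> 'p \<Rightarrow> real" where
  "acoef v1 eta v i j = (let u = (1 / norm v) *\<^sub>R v; c = u \<bullet> v1 in
     2 * eta * (c^2 * (u $ i * u $ j) - c * (u $ i * v1 $ j)))"

lemma dterm_acoef:
  "dterm v1 eta x v = (\<Sum>i\<in>UNIV. \<Sum>j\<in>UNIV. acoef v1 eta v i j * (x $ i * x $ j))"
proof -
  define u where "u = (1 / norm v) *\<^sub>R v"
  define c where "c = u \<bullet> v1"
  have xu: "x \<bullet> u = (\<Sum>i\<in>UNIV. x $ i * u $ i)" by (simp add: inner_vec_def)
  have xv: "x \<bullet> v1 = (\<Sum>i\<in>UNIV. x $ i * v1 $ i)" by (simp add: inner_vec_def)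
  have "(\<Sum>i\<in>UNIV. \<Sum>j\<in>UNIV. 2 * eta * (c^2 * (u $ i * u $ j) - c * (u $ i * v1 $ j)) * (x $ i * x $ j))
     = (\<Sum>i\<in>UNIV. \<Sum>j\<in>UNIV. 2 * eta * c^2 * ((x $ i * u $ i) * (x $ j * u $ j)) - 2 * eta * c * ((x $ i * u $ i) * (x $ j * v1 $ j)))"
    by (intro sum.cong refl) (simp add: algebra_simps)
  also have "\<dots> = 2 * eta * c^2 * (\<Sum>i\<in>UNIV. \<Sum>j\<in>UNIV. (x $ i * u $ i) * (x $ j * u $ j))
      - 2 * eta * c * (\<Sum>i\<in>UNIV. \<Sum>j\<in>UNIV. (x $ i * u $ i) * (x $ j * v1 $ j))"
    by (simp add: sum_subtractf sum_distrib_left)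
  also have "\<dots> = 2 * eta * c^2 * ((x \<bullet> u) * (x \<bullet> u)) - 2 * eta * c * ((x \<bullet> u) * (x \<bullet> v1))"
    by (simp add: xu xv sum_product)
  also have "\<dots> = dterm v1 eta x v"
    by (simp add: dterm_def Let_def u_def c_def power2_eq_square algebra_simps)
  finally have "dterm v1 eta x v = (\<Sum>i\<in>UNIV. \<Sum>j\<in>UNIV. 2 * eta * (c^2 * (u $ i * u $ j) - c * (u $ i * v1 $ j)) * (x $ i * x $ j))" by simp
  then show ?thesis by (simp add: acoef_def Let_def u_def c_def)
qed

lemma acoef_Sigma:
  fixes S :: "real^'p^'p"
  shows "(\<Sum>i\<in>UNIV. \<Sum>j\<in>UNIV. acoef v1 eta v i j * S $ i $ j)
     = (let u = (1 / norm v) *\<^sub>R v; c = u \<bullet> v1 in 2 * eta * (c^2 * (u \<bullet> (S *v u)) - c * (u \<bullet> (S *v v1))))"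
proof -
  define u where "u = (1 / norm v) *\<^sub>R v"
  define c where "c = u \<bullet> v1"
  have e: "u \<bullet> (S *v w) = (\<Sum>i\<in>UNIV. \<Sum>j\<in>UNIV. u $ i * w $ j * S $ i $ j)" for w :: "real^'p"
    by (simp add: inner_vec_def matrix_vector_mult_def sum_distrib_left algebra_simps)
  show ?thesis unfolding Let_def u_def[symmetric] c_def[symmetric] e
    unfolding acoef_def Let_def u_def[symmetric] c_def[symmetric] sum_distrib_left sum_subtractf[symmetric]
    by (intro sum.cong refl) (simp add: algebra_simps)
qed

lemma unit_of_nonzero:
  fixes v :: "real^'p" assumes "v \<noteq> 0"
  shows "norm ((1 / norm v) *\<^sub>R v) = 1" "v = norm v *\<^sub>R ((1 / norm v) *\<^sub>R v)"
    "sin2 ((1 / norm v) *\<^sub>R v) w = sin2 v w"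
  using assms by (auto simp: sin2_scale)

lemma dterm_bound_gen:
  fixes v v1 x :: "real^'p"
  assumes v: "v \<noteq> 0" and v1: "norm v1 = 1" and x: "norm x \<le> B" and eta: "eta > 0"
  shows "\<bar>dterm v1 eta x v\<bar> \<le> 2 * eta * B^2 * sqrt (sin2 v v1)"
  using dterm_bound[OF unit_of_nonzero(1)[OF v] v1 x eta] unit_of_nonzero(3)[OF v, of v1]
  by (simp add: dterm_def Let_def)

lemma kras_scale:
  fixes w x :: "real^'p"
  assumes "k \<noteq> 0"
  shows "kras_step eta x (k *\<^sub>R w) = k *\<^sub>R kras_step eta x w"
proof (cases "w = 0")
  case True then show ?thesis by (simp add: kras_step_def)
next
  case False
  then have "norm w \<noteq> 0" by simp
  then show ?thesis using assms
    by (simp add: kras_step_def Let_def scaleR_add_right scaleR_diff_right power2_eq_square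
        field_simps)
qed

lemma kras_gen:
  fixes v v1 x :: "real^'p"
  assumes v: "v \<noteq> 0" and v1: "norm v1 = 1" and x: "norm x \<le> B" and eta: "eta > 0"
  shows "sin2 (kras_step eta x v) v1 \<le> sin2 v v1 + dterm v1 eta x v + eta^2 * B^4"
    and "kras_step eta x v \<noteq> 0"
proof -
  define u where "u = (1 / norm v) *\<^sub>R v"
  define y where "y = x \<bullet> u"
  have u1: "norm u = 1" using unit_of_nonzero(1)[OF v] u_def by simp
  have nv: "norm v \<noteq> 0" using v by simp
  have vu: "v = norm v *\<^sub>R u" using v u_def by simp
  have xv: "x \<bullet> v = norm v * y" using vu y_def by (metis inner_scaleR_right)
  have nv2: "(norm v)^2 = norm v * norm v" by (simp add: power2_eq_square)
  have "kras_step eta x v = kras_step eta x (norm v *\<^sub>R u)" using arg_cong[OF vu, of "kras_step eta x"] .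
  also have "\<dots> = norm v *\<^sub>R kras_step eta x u" using nv by (rule kras_scale)
  also have "kras_step eta x u = u + (eta * y) *\<^sub>R (x - y *\<^sub>R u)"
    using u1 by (simp add: kras_step_def Let_def y_def)
  finally have eq: "kras_step eta x v = norm v *\<^sub>R (u + (eta * y) *\<^sub>R (x - y *\<^sub>R u))" .
  have "sin2 (kras_step eta x v) v1 = sin2 (u + (eta * y) *\<^sub>R (x - y *\<^sub>R u)) v1"
    unfolding eq using nv by (simp add: sin2_scale)
  also have "\<dots> \<le> sin2 u v1 + 2 * eta * ((u \<bullet> v1)^2 * y^2 - (u \<bullet> v1) * y * (x \<bullet> v1)) + eta^2 * B^4"
    using kras_unit[OF u1 v1 x eta] unfolding y_def .
  also have "\<dots> = sin2 v v1 + dterm v1 eta x v + eta^2 * B^4"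
    using unit_of_nonzero(3)[OF v, of v1] by (simp add: dterm_def Let_def u_def y_def)
  finally show "sin2 (kras_step eta x v) v1 \<le> sin2 v v1 + dterm v1 eta x v + eta^2 * B^4" .
  have "u \<bullet> (u + (eta * y) *\<^sub>R (x - y *\<^sub>R u)) = 1"
    using u1 by (simp add: inner_add_right inner_diff_right y_def inner_commute dot_square_norm)
  then have "u + (eta * y) *\<^sub>R (x - y *\<^sub>R u) \<noteq> 0" by auto
  then show "kras_step eta x v \<noteq> 0" unfolding eq using nv by simp
qed

lemma oja_gen:
  fixes v v1 x :: "real^'p"
  assumes v: "v \<noteq> 0" and v1: "norm v1 = 1" and x: "norm x \<le> B" and eta: "eta > 0"
  shows "sin2 (oja_step eta x v) v1 \<le> sin2 v v1 + dterm v1 eta x v + (5 * B^4 + 2 * eta * B^6) * eta^2"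
    and "oja_step eta x v \<noteq> 0"
proof -
  define u where "u = (1 / norm v) *\<^sub>R v"
  have u1: "norm u = 1" using unit_of_nonzero(1)[OF v] u_def by simp
  have nv: "norm v > 0" using v by simp
  have vu: "v = norm v *\<^sub>R u" using v u_def by simp
  have w: "v + (eta * (x \<bullet> v)) *\<^sub>R x = norm v *\<^sub>R (u + (eta * (x \<bullet> u)) *\<^sub>R x)"
    by (subst (1 2) vu) (simp add: algebra_simps)
  have eq: "oja_step eta x v = oja_step eta x u"
    unfolding oja_step_def Let_def w using nv by simp
  have "sin2 (oja_step eta x v) v1 \<le> sin2 u v1 + 2 * eta * ((u \<bullet> v1)^2 * (x \<bullet> u)^2 - (u \<bullet> v1) * (x \<bullet> u) * (x \<bullet> v1)) + (5 * B^4 + 2 * eta * B^6) * eta^2"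
    unfolding eq by (rule oja_unit[OF u1 v1 x eta])
  also have "\<dots> = sin2 v v1 + dterm v1 eta x v + (5 * B^4 + 2 * eta * B^6) * eta^2"
    using unit_of_nonzero(3)[OF v, of v1] by (simp add: dterm_def Let_def u_def)
  finally show "sin2 (oja_step eta x v) v1 \<le> sin2 v v1 + dterm v1 eta x v + (5 * B^4 + 2 * eta * B^6) * eta^2" .
  have "u \<bullet> (u + (eta * (x \<bullet> u)) *\<^sub>R x) = 1 + eta * (x \<bullet> u)^2"
    using u1 by (simp add: inner_add_right inner_commute dot_square_norm power2_eq_square)
  moreover have "1 + eta * (x \<bullet> u)^2 > 0" using eta by (simp add: add_pos_nonneg)
  ultimately have "u + (eta * (x \<bullet> u)) *\<^sub>R x \<noteq> 0" by auto
  then have "v + (eta * (x \<bullet> v)) *\<^sub>R x \<noteq> 0" unfolding w using nv by simp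
  then show "oja_step eta x v \<noteq> 0" unfolding oja_step_def Let_def by simp
qed



lemma orthonormal_expand:
  fixes e :: "nat \<Rightarrow> real^'p"
  assumes orth: "\<forall>i<CARD('p). \<forall>j<CARD('p). e i \<bullet> e j = (if i = j then 1 else 0)"
  shows "x = (\<Sum>i<CARD('p). (x \<bullet> e i) *\<^sub>R e i)"
proof -
  define n where "n = CARD('p)"
  define E where "E = e ` {..<n}"
  have inj: "inj_on e {..<n}"
  proof (rule inj_onI)
    fix i j assume "i \<in> {..<n}" "j \<in> {..<n}" "e i = e j"
    then have "e i \<bullet> e j = 1" using orth n_def by (metis lessThan_iff)
    then show "i = j" using orth n_def \<open>i \<in> {..<n}\<close> \<open>j \<in> {..<n}\<close>
      by (metis lessThan_iff zero_neq_one)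
  qed
  have cE: "card E = n" unfolding E_def using card_image[OF inj] by simp
  have po: "pairwise orthogonal E"
    unfolding pairwise_def E_def orthogonal_def using orth n_def by auto
  have n0: "0 \<notin> E" unfolding E_def using orth n_def by (force)
  have ind: "independent E" by (rule pairwise_orthogonal_independent[OF po n0])
  have "UNIV \<subseteq> span E"
    by (rule card_ge_dim_independent[OF _ ind]) (simp_all add: cE n_def)
  define r where "r = x - (\<Sum>i<n. (x \<bullet> e i) *\<^sub>R e i)"
  have rs: "r \<in> span E" using \<open>UNIV \<subseteq> span E\<close> by auto
  have "orthogonal r y" if "y \<in> E" for y
  proof -
    obtain j where j: "j < n" "y = e j" using \<open>y \<in> E\<close> E_def by auto
    have "(\<Sum>i<n. (x \<bullet> e i) * (e i \<bullet> e j)) = (\<Sum>i<n. if i = j then x \<bullet> e j else 0)"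
      using orth j n_def by (intro sum.cong refl) auto
    also have "\<dots> = x \<bullet> e j" using j by simp
    finally show ?thesis unfolding orthogonal_def r_def j
      by (simp add: inner_diff_left inner_sum_left)
  qed
  then have "orthogonal r r" using orthogonal_to_span[OF rs] by blast
  then have "r = 0" by (simp add: orthogonal_def)
  then show ?thesis unfolding r_def n_def by simp
qed

lemma spectral_bound:
  fixes S :: "real^'p^'p" and u v1 :: "real^'p"
  assumes eigs: "ordered_eigenvalues S lam" and dim: "CARD('p) \<ge> 2" and gap: "lam 0 > lam 1"
    and v1: "norm v1 = 1" "S *v v1 = lam 0 *\<^sub>R v1" and u: "norm u = 1"
  shows "u \<bullet> (S *v u) \<le> lam 0 - (lam 0 - lam 1) * (1 - (u \<bullet> v1)^2)"
proof -
  define n where "n = CARD('p)"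
  obtain e where orth: "\<forall>i<n. \<forall>j<n. e i \<bullet> e j = (if i = j then 1 else 0)"
    and eig: "\<forall>i<n. S *v e i = lam i *\<^sub>R e i"
    and mono: "\<forall>i j. i \<le> j \<longrightarrow> j < n \<longrightarrow> lam j \<le> lam i"
    using eigs unfolding ordered_eigenvalues_def n_def by blast
  have exp: "\<And>x. x = (\<Sum>i<n. (x \<bullet> e i) *\<^sub>R e i)"
    using orthonormal_expand[of e] orth n_def by blast
  define b where "b i = u \<bullet> e i" for i
  define d where "d i = v1 \<bullet> e i" for i
  have Sx: "S *v x = (\<Sum>i<n. ((x \<bullet> e i) * lam i) *\<^sub>R e i)" for x
  proof -
    have "S *v x = S *v (\<Sum>i<n. (x \<bullet> e i) *\<^sub>R e i)" using exp[of x] by simp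
    also have "\<dots> = (\<Sum>i<n. S *v ((x \<bullet> e i) *\<^sub>R e i))"
      by (rule linear_sum[OF matrix_vector_mul_linear])
    also have "\<dots> = (\<Sum>i<n. ((x \<bullet> e i) * lam i) *\<^sub>R e i)"
      using eig by (intro sum.cong refl) (simp add: matrix_vector_mult_scaleR)
    finally show ?thesis .
  qed
  have ipr: "y \<bullet> x = (\<Sum>i<n. (x \<bullet> e i) * (y \<bullet> e i))" for x y
    by (subst exp[of x]) (simp add: inner_sum_right)
  have uSu: "u \<bullet> (S *v u) = (\<Sum>i<n. lam i * (b i)^2)"
    unfolding Sx by (simp add: inner_sum_right b_def power2_eq_square algebra_simps)
  have pars: "(\<Sum>i<n. (b i)^2) = 1"
    using ipr[of u u] u by (simp add: b_def power2_eq_square dot_square_norm)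
  have parsd: "(\<Sum>i<n. (d i)^2) = 1"
    using ipr[of v1 v1] v1 by (simp add: d_def power2_eq_square dot_square_norm)
  have c: "u \<bullet> v1 = (\<Sum>i<n. d i * b i)" using ipr[of v1 u] by (simp add: b_def d_def inner_commute mult.commute)
  have dz: "d j = 0" if "1 \<le> j" "j < n" for j
  proof -
    have "(S *v v1) \<bullet> e j = lam 0 * d j" using v1 by (simp add: d_def)
    moreover have "(S *v v1) \<bullet> e j = (\<Sum>i<n. (d i * lam i) * (e i \<bullet> e j))"
      unfolding Sx by (simp add: inner_sum_left d_def)
    moreover have "\<dots> = (\<Sum>i<n. if i = j then d j * lam j else 0)"
      using orth that by (intro sum.cong refl) auto
    moreover have "\<dots> = d j * lam j" using that by simp
    ultimately have "d j * (lam 0 - lam j) = 0" by (simp add: algebra_simps)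
    moreover have "lam j \<le> lam 1" using mono that by auto
    ultimately show ?thesis using gap by auto
  qed
  have n1: "0 < n" "1 < n" using dim n_def by auto
  have split: "(\<Sum>i<n. f i) = f 0 + (\<Sum>i\<in>{1..<n}. f i)" for f :: "nat \<Rightarrow> real"
    using sum.atLeast_Suc_lessThan[OF n1(1), of f] by (simp add: lessThan_atLeast0)
  have z: "(\<Sum>i\<in>{1..<n}. f i * d i) = 0" for f
    using dz by (intro sum.neutral) auto
  have cc: "u \<bullet> v1 = d 0 * b 0" using c split[of "\<lambda>i. d i * b i"] z[of b] by (simp add: mult.commute)
  have d0: "(d 0)^2 = 1" using parsd split[of "\<lambda>i. (d i)^2"] z[of d]
    by (simp add: power2_eq_square)
  have c2: "(u \<bullet> v1)^2 = (b 0)^2" using cc d0 by (simp add: power_mult_distrib)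
  have rest: "(\<Sum>i\<in>{1..<n}. (b i)^2) = 1 - (b 0)^2" using pars split[of "\<lambda>i. (b i)^2"] by simp
  have le: "(\<Sum>i\<in>{1..<n}. lam i * (b i)^2) \<le> (\<Sum>i\<in>{1..<n}. lam 1 * (b i)^2)"
    using mono by (intro sum_mono mult_right_mono) auto
  have "u \<bullet> (S *v u) = lam 0 * (b 0)^2 + (\<Sum>i\<in>{1..<n}. lam i * (b i)^2)"
    using uSu split[of "\<lambda>i. lam i * (b i)^2"] by simp
  also have "\<dots> \<le> lam 0 * (b 0)^2 + lam 1 * (1 - (b 0)^2)"
    using le rest by (simp add: sum_distrib_left[symmetric])
  finally show ?thesis unfolding c2 by (simp add: algebra_simps)
qed



lemma kras_step_meas[measurable]:
  fixes f g :: "'a \<Rightarrow> real^'p"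
  assumes [measurable]: "f \<in> borel_measurable N" "g \<in> borel_measurable N"
  shows "(\<lambda>\<omega>. kras_step e (f \<omega>) (g \<omega>)) \<in> borel_measurable N"
  unfolding kras_step_def Let_def by measurable

lemma oja_step_meas[measurable]:
  fixes f g :: "'a \<Rightarrow> real^'p"
  assumes [measurable]: "f \<in> borel_measurable N" "g \<in> borel_measurable N"
  shows "(\<lambda>\<omega>. oja_step e (f \<omega>) (g \<omega>)) \<in> borel_measurable N"
  unfolding oja_step_def Let_def by measurable

lemma sin2_meas[measurable]:
  fixes f :: "'a \<Rightarrow> real^'p"
  assumes [measurable]: "f \<in> borel_measurable N"
  shows "(\<lambda>\<omega>. sin2 (f \<omega>) v1) \<in> borel_measurable N"
  unfolding sin2_def by measurable

lemma nat_filtration_facts: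
  fixes M :: "'a measure" and Z :: "nat \<Rightarrow> 'a \<Rightarrow> real^'p"
  assumes Zm: "\<And>i. Z i \<in> borel_measurable M"
  shows "space (nat_filtration M Z t) = space M"
    and "sets (nat_filtration M Z t) = sigma_sets (space M) (\<Union>i\<in>{..t}. {Z i -` A \<inter> space M | A. A \<in> sets (borel :: (real^'p) measure)})"
    and "sets (nat_filtration M Z t) \<subseteq> sets M"
    and "s \<le> t \<Longrightarrow> sets (nat_filtration M Z s) \<subseteq> sets (nat_filtration M Z t)"
    and "i \<le> t \<Longrightarrow> Z i \<in> borel_measurable (nat_filtration M Z t)"
    and "subalgebra M (nat_filtration M Z t)"
    and "s \<le> t \<Longrightarrow> subalgebra (nat_filtration M Z t) (nat_filtration M Z s)"
proof -
  define G where "G t = (\<Union>i\<in>{..t}. {Z i -` A \<inter> space M | A. A \<in> sets (borel :: (real^'p) measure)})" for t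
  have GP: "G t \<subseteq> Pow (space M)" for t unfolding G_def by auto
  have GM: "G t \<subseteq> sets M" for t unfolding G_def using Zm measurable_sets by blast
  have sp: "space (nat_filtration M Z t) = space M" for t
    unfolding nat_filtration_def G_def[symmetric] using GP by (simp add: space_measure_of_conv)
  have st: "sets (nat_filtration M Z t) = sigma_sets (space M) (G t)" for t
    unfolding nat_filtration_def G_def[symmetric] using GP by (simp add: sets_measure_of)
  show "space (nat_filtration M Z t) = space M" by (rule sp)
  show "sets (nat_filtration M Z t) = sigma_sets (space M) (\<Union>i\<in>{..t}. {Z i -` A \<inter> space M | A. A \<in> sets (borel :: (real^'p) measure)})"
    using st G_def by simp
  have sub: "sets (nat_filtration M Z t) \<subseteq> sets M" for t
    unfolding st by (rule sets.sigma_sets_subset[OF GM])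
  then show "sets (nat_filtration M Z t) \<subseteq> sets M" .
  have mono: "sets (nat_filtration M Z s) \<subseteq> sets (nat_filtration M Z t)" if "s \<le> t" for s t
    unfolding st by (rule sigma_sets_subseteq) (use that in \<open>fastforce simp: G_def\<close>)
  then show "s \<le> t \<Longrightarrow> sets (nat_filtration M Z s) \<subseteq> sets (nat_filtration M Z t)" .
  show "i \<le> t \<Longrightarrow> Z i \<in> borel_measurable (nat_filtration M Z t)"
  proof (rule measurableI)
    fix x assume "x \<in> space (nat_filtration M Z t)" then show "Z i x \<in> space borel" by simp
  next
    fix A :: "(real^'p) set" assume "i \<le> t" "A \<in> sets borel"
    then have "Z i -` A \<inter> space M \<in> G t" unfolding G_def by blast
    then show "Z i -` A \<inter> space (nat_filtration M Z t) \<in> sets (nat_filtration M Z t)"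
      unfolding sp st by (rule sigma_sets.Basic)
  qed
  show "subalgebra M (nat_filtration M Z t)" unfolding subalgebra_def using sp sub by simp
  show "s \<le> t \<Longrightarrow> subalgebra (nat_filtration M Z t) (nat_filtration M Z s)"
    unfolding subalgebra_def using sp mono by simp
qed

lemma (in prob_space) indep_past:
  fixes Z :: "nat \<Rightarrow> 'a \<Rightarrow> real^'p"
  assumes ind: "indep_vars (\<lambda>_. borel) Z UNIV" and t: "t \<ge> 1"
  shows "indep_set (sets (nat_filtration M Z (t - 1))) (sigma_sets (space M) {Z t -` A \<inter> space M | A. A \<in> sets (borel :: (real^'p) measure)})"
proof -
  define E where "E i = {Z i -` A \<inter> space M | A. A \<in> sets (borel :: (real^'p) measure)}" for i
  define I where "I b = (if b then {..t-1} else {t})" for b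
  have Zm: "Z i \<in> borel_measurable M" for i using ind unfolding indep_vars_def2 by auto
  have ie: "indep_sets E UNIV" using ind unfolding indep_vars_def2 E_def by auto
  have ie2: "indep_sets E (\<Union>j\<in>UNIV. I j)" by (rule indep_sets_mono_index[OF _ ie]) auto
  have ist: "Int_stable (E i)" for i
    unfolding Int_stable_def E_def
    apply auto
    subgoal for A B by (rule exI[of _ "A \<inter> B"]) auto
    done
  have dj: "disjoint_family_on I UNIV"
    unfolding disjoint_family_on_def I_def using t by auto
  have r: "indep_sets (\<lambda>j. sigma_sets (space M) (\<Union>i\<in>I j. E i)) UNIV"
    by (rule indep_sets_collect_sigma[OF ie2 ist dj])
  have eq: "(\<lambda>j. sigma_sets (space M) (\<Union>i\<in>I j. E i)) =
      case_bool (sets (nat_filtration M Z (t - 1))) (sigma_sets (space M) (E t))"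
  proof
    fix j show "sigma_sets (space M) (\<Union>i\<in>I j. E i) =
      case_bool (sets (nat_filtration M Z (t - 1))) (sigma_sets (space M) (E t)) j"
      by (cases j) (simp_all add: I_def E_def nat_filtration_facts(2)[OF Zm])
  qed
  show ?thesis using r unfolding eq unfolding indep_set_def E_def .
qed

lemma (in prob_space) cond_exp_indep:
  fixes Z :: "nat \<Rightarrow> 'a \<Rightarrow> real^'p" and g :: "real^'p \<Rightarrow> real"
  assumes ind: "indep_vars (\<lambda>_. borel) Z UNIV" and t: "t \<ge> 1"
    and g[measurable]: "g \<in> borel_measurable borel" and gi: "integrable M (\<lambda>\<omega>. g (Z t \<omega>))"
  shows "AE \<omega> in M. real_cond_exp M (nat_filtration M Z (t - 1)) (\<lambda>\<omega>. g (Z t \<omega>)) \<omega> = expectation (\<lambda>\<omega>. g (Z t \<omega>))"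
proof -
  define F where "F = nat_filtration M Z (t - 1)"
  have Zm[measurable]: "Z i \<in> borel_measurable M" for i using ind unfolding indep_vars_def2 by auto
  note ff = nat_filtration_facts[where Z=Z and M=M, OF Zm]
  interpret sigma_finite_subalgebra M F
    by (rule finite_measure_subalgebra_is_sigma_finite)
       (simp add: finite_measure_subalgebra_def finite_measure_subalgebra_axioms_def F_def ff(6)
          finite_measure_axioms)
  have ip: "indep_set (sets F) (sigma_sets (space M) {Z t -` A \<inter> space M | A. A \<in> sets (borel :: (real^'p) measure)})"
    unfolding F_def by (rule indep_past[OF ind t])
  show ?thesis unfolding F_def[symmetric]
  proof (rule real_cond_exp_charact)
    fix A assume A: "A \<in> sets F"
    then have AM: "A \<in> sets M" using ff(3) F_def by auto
    have Ameas: "indicator A \<in> borel_measurable F" using A by simp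
    have iv: "indep_var borel (indicator A :: 'a \<Rightarrow> real) borel (\<lambda>\<omega>. g (Z t \<omega>))"
      unfolding indep_var_eq
    proof (intro conjI)
      show "random_variable borel (indicator A :: 'a \<Rightarrow> real)" using AM by simp
      show "random_variable borel (\<lambda>\<omega>. g (Z t \<omega>))" by simp
      show "indep_set (sigma_sets (space M) {(indicator A :: 'a \<Rightarrow> real) -` B \<inter> space M |B. B \<in> sets borel})
          (sigma_sets (space M) {(\<lambda>\<omega>. g (Z t \<omega>)) -` B \<inter> space M |B. B \<in> sets borel})"
      proof (rule indep_setI)
        have s1: "sigma_sets (space M) {(indicator A :: 'a \<Rightarrow> real) -` B \<inter> space M |B. B \<in> sets borel} \<subseteq> sets F"
        proof (rule sigma_algebra.sigma_sets_subset[of "space M"])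
          show "sigma_algebra (space M) (sets F)" using sets.sigma_algebra_axioms[of F] ff(1) F_def by simp
          show "{(indicator A :: 'a \<Rightarrow> real) -` B \<inter> space M |B. B \<in> sets borel} \<subseteq> sets F"
            using measurable_sets[OF Ameas] ff(1) F_def by auto
        qed
        have s2: "sigma_sets (space M) {(\<lambda>\<omega>. g (Z t \<omega>)) -` B \<inter> space M |B. B \<in> sets borel}
            \<subseteq> sigma_sets (space M) {Z t -` A \<inter> space M | A. A \<in> sets (borel :: (real^'p) measure)}"
        proof (rule sigma_sets_subseteq, safe)
          fix B :: "real set" assume "B \<in> sets borel"
          then have "g -` B \<in> sets borel" using measurable_sets[OF g] by simp
          moreover have "(\<lambda>\<omega>. g (Z t \<omega>)) -` B \<inter> space M = Z t -` (g -` B) \<inter> space M" by auto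
          ultimately show "\<exists>A. (\<lambda>\<omega>. g (Z t \<omega>)) -` B \<inter> space M = Z t -` A \<inter> space M \<and> A \<in> sets borel" by blast
        qed
        fix a b assume "a \<in> sigma_sets (space M) {(indicator A :: 'a \<Rightarrow> real) -` B \<inter> space M |B. B \<in> sets borel}"
          "b \<in> sigma_sets (space M) {(\<lambda>\<omega>. g (Z t \<omega>)) -` B \<inter> space M |B. B \<in> sets borel}"
        then show "prob (a \<inter> b) = prob a * prob b"
          using s1 s2 by (intro indep_setD[OF ip]) auto
      next
        show "sigma_sets (space M) {(indicator A :: 'a \<Rightarrow> real) -` B \<inter> space M |B. B \<in> sets borel} \<subseteq> events"
          using AM by (intro sets.sigma_sets_subset) auto
        show "sigma_sets (space M) {(\<lambda>\<omega>. g (Z t \<omega>)) -` B \<inter> space M |B. B \<in> sets borel} \<subseteq> events"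
          by (intro sets.sigma_sets_subset) (auto intro: measurable_sets)
      qed
    qed
    have "(\<integral>\<omega>\<in>A. g (Z t \<omega>) \<partial>M) = (\<integral>\<omega>. indicator A \<omega> * g (Z t \<omega>) \<partial>M)"
      by (simp add: set_lebesgue_integral_def)
    also have "\<dots> = (\<integral>\<omega>. indicator A \<omega> \<partial>M) * expectation (\<lambda>\<omega>. g (Z t \<omega>))"
      by (rule indep_var_lebesgue_integral[OF iv]) (use AM gi in \<open>auto intro!: integrable_real_indicator simp: emeasure_eq_measure\<close>)
    also have "\<dots> = (\<integral>\<omega>. indicator A \<omega> * expectation (\<lambda>\<omega>. g (Z t \<omega>)) \<partial>M)"
      by simp
    also have "\<dots> = (\<integral>\<omega>\<in>A. expectation (\<lambda>\<omega>. g (Z t \<omega>)) \<partial>M)"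
      by (simp add: set_lebesgue_integral_def)
    finally show "(\<integral>\<omega>\<in>A. g (Z t \<omega>) \<partial>M) = (\<integral>\<omega>\<in>A. expectation (\<lambda>\<omega>. g (Z t \<omega>)) \<partial>M)" .
  qed (use gi in auto)
qed



lemma vec_nth_meas[measurable]: "(\<lambda>x::real^'p. x $ i) \<in> borel_measurable borel"
  by (intro borel_measurable_continuous_onI continuous_on_component continuous_on_id)

lemma dterm_meas[measurable]:
  fixes f g :: "'a \<Rightarrow> real^'p"
  assumes [measurable]: "f \<in> borel_measurable N" "g \<in> borel_measurable N"
  shows "(\<lambda>\<omega>. dterm v1 e (f \<omega>) (g \<omega>)) \<in> borel_measurable N"
  unfolding dterm_def Let_def by measurable

lemma acoef_meas[measurable]:
  fixes g :: "'a \<Rightarrow> real^'p"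
  assumes [measurable]: "g \<in> borel_measurable N"
  shows "(\<lambda>\<omega>. acoef v1 e (g \<omega>) i j) \<in> borel_measurable N"
  unfolding acoef_def Let_def by measurable

lemma matrix_meas:
  fixes f :: "'a \<Rightarrow> real^'p"
  assumes [measurable]: "f \<in> borel_measurable N"
  shows "(\<lambda>\<omega>. \<chi> i j. f \<omega> $ i * f \<omega> $ j) \<in> borel_measurable N"
proof -
  have "(\<lambda>x::real^'p. \<chi> i j. x $ i * x $ j) \<in> borel_measurable borel"
    by (intro borel_measurable_continuous_onI continuous_on_vec_lambda continuous_intros
        continuous_on_component continuous_on_id)
  from measurable_compose[OF assms this] show ?thesis by simp
qed

lemma acoef_bound:
  fixes v v1 :: "real^'p"
  assumes "norm v1 = 1" "eta > 0"
  shows "\<bar>acoef v1 eta v i j\<bar> \<le> 4 * eta"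
proof -
  define u where "u = (1 / norm v) *\<^sub>R v"
  have nu: "norm u \<le> 1" unfolding u_def by (cases "v = 0") auto
  define c where "c = u \<bullet> v1"
  have c1: "\<bar>c\<bar> \<le> 1" unfolding c_def using Cauchy_Schwarz_ineq2[of u v1] nu assms(1) by simp
  have ui: "\<bar>u $ k\<bar> \<le> 1" for k using component_le_norm_cart[of u k] nu by simp
  have vj: "\<bar>v1 $ k\<bar> \<le> 1" for k using component_le_norm_cart[of v1 k] assms(1) by simp
  have cc: "\<bar>c\<bar> * \<bar>c\<bar> \<le> 1" using mult_le_one[OF c1 abs_ge_zero c1] .
  have uu: "\<bar>u $ i\<bar> * \<bar>u $ j\<bar> \<le> 1" using mult_le_one[OF ui[of i] abs_ge_zero ui[of j]] .
  have "\<bar>c^2 * (u $ i * u $ j)\<bar> = (\<bar>c\<bar> * \<bar>c\<bar>) * (\<bar>u $ i\<bar> * \<bar>u $ j\<bar>)"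
    by (simp add: abs_mult power2_eq_square)
  also have "\<dots> \<le> 1" using mult_le_one[OF cc _ uu] by simp
  finally have "\<bar>c^2 * (u $ i * u $ j)\<bar> \<le> 1" .
  moreover have "\<bar>c * (u $ i * v1 $ j)\<bar> \<le> 1"
    using c1 ui[of i] vj[of j] by (simp add: abs_mult mult_le_one)
  ultimately have "\<bar>c^2 * (u $ i * u $ j) - c * (u $ i * v1 $ j)\<bar> \<le> 2" by linarith
  then have "\<bar>2 * eta * (c^2 * (u $ i * u $ j) - c * (u $ i * v1 $ j))\<bar> \<le> 2 * eta * 2"
    using assms(2) by (simp add: abs_mult)
  then show ?thesis by (simp add: acoef_def Let_def u_def c_def)
qed



lemma norm_matrix_le:
  fixes m :: "real^'n^'k"
  shows "norm m \<le> (\<Sum>i\<in>UNIV. \<Sum>j\<in>UNIV. \<bar>m $ i $ j\<bar>)"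
proof -
  have "norm m = L2_set (\<lambda>i. norm (m $ i)) UNIV" by (simp add: norm_vec_def)
  also have "\<dots> \<le> (\<Sum>i\<in>UNIV. norm (m $ i))" by (rule L2_set_le_sum) simp
  also have "\<dots> \<le> (\<Sum>i\<in>UNIV. \<Sum>j\<in>UNIV. \<bar>m $ i $ j\<bar>)"
    by (intro sum_mono norm_le_l1_cart)
  finally show ?thesis .
qed

lemma (in prob_space) Sigma_entry:
  fixes X :: "nat \<Rightarrow> 'a \<Rightarrow> real^'p"
  assumes Xm: "\<And>t. t \<ge> 1 \<Longrightarrow> X t \<in> borel_measurable M"
    and ident: "\<forall>t\<ge>1. distr M borel (X t) = distr M borel (X 1)"
    and bounded: "\<forall>t\<ge>1. AE \<omega> in M. norm (X t \<omega>) \<le> B"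
    and cov: "S = expectation (\<lambda>\<omega>. \<chi> i j. X 1 \<omega> $ i * X 1 \<omega> $ j)"
    and t: "t \<ge> 1"
  shows "S $ i $ j = expectation (\<lambda>\<omega>. X t \<omega> $ i * X t \<omega> $ j)"
    and "integrable M (\<lambda>\<omega>. X t \<omega> $ i * X t \<omega> $ j)"
proof -
  have xx: "\<bar>x $ i * x $ j\<bar> \<le> B * B" if "norm x \<le> B" for x :: "real^'p" and i j
  proof -
    have "\<bar>x $ i\<bar> \<le> B" "\<bar>x $ j\<bar> \<le> B" using component_le_norm_cart[of x] that by (meson order_trans)+
    then show ?thesis unfolding abs_mult by (intro mult_mono) auto
  qed
  show int: "integrable M (\<lambda>\<omega>. X t \<omega> $ i * X t \<omega> $ j)"
  proof (rule integrable_const_bound[where B="B * B"])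
    have Bt: "AE \<omega> in M. norm (X t \<omega>) \<le> B" using bounded t by simp
    show "AE x in M. norm (X t x $ i * X t x $ j) \<le> B * B"
      using Bt by eventually_elim (simp add: xx)
    show "(\<lambda>x. X t x $ i * X t x $ j) \<in> borel_measurable M" using Xm[OF t] by measurable
  qed
  have X1[measurable]: "X 1 \<in> borel_measurable M" using Xm by simp
  have Xt[measurable]: "X t \<in> borel_measurable M" using Xm t by simp
  have intM: "integrable M (\<lambda>\<omega>. \<chi> i j. X 1 \<omega> $ i * X 1 \<omega> $ j)"
  proof (rule integrable_const_bound[where B="\<Sum>i\<in>(UNIV::'p set). \<Sum>j\<in>(UNIV::'p set). B * B"])
    show "AE x in M. norm (\<chi> i j. X 1 x $ i * X 1 x $ j) \<le> (\<Sum>i\<in>(UNIV::'p set). \<Sum>j\<in>(UNIV::'p set). B * B)"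
    proof -
      have B1: "AE \<omega> in M. norm (X 1 \<omega>) \<le> B" using bounded by simp
      show ?thesis using B1
      proof eventually_elim
        fix x assume x: "norm (X 1 x) \<le> B"
        have "norm (\<chi> i j. X 1 x $ i * X 1 x $ j) \<le> (\<Sum>i\<in>UNIV. \<Sum>j\<in>UNIV. \<bar>(\<chi> i j. X 1 x $ i * X 1 x $ j) $ i $ j\<bar>)"
          by (rule norm_matrix_le)
        also have "\<dots> \<le> (\<Sum>i\<in>(UNIV::'p set). \<Sum>j\<in>(UNIV::'p set). B * B)"
          by (intro sum_mono) (use xx[OF x] in simp_all)
        finally show "norm (\<chi> i j. X 1 x $ i * X 1 x $ j) \<le> (\<Sum>i\<in>(UNIV::'p set). \<Sum>j\<in>(UNIV::'p set). B * B)" .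
      qed
    qed
    show "(\<lambda>\<omega>. \<chi> i j. X 1 \<omega> $ i * X 1 \<omega> $ j) \<in> borel_measurable M"
      by (rule matrix_meas[OF X1])
  qed
  have bl: "bounded_linear (\<lambda>m::real^'p^'p. m $ i $ j)"
    using bounded_linear_compose[OF bounded_linear_vec_nth bounded_linear_vec_nth] .
  have "S $ i $ j = expectation (\<lambda>\<omega>. (\<chi> i j. X 1 \<omega> $ i * X 1 \<omega> $ j) $ i $ j)"
    unfolding cov by (rule integral_bounded_linear[OF bl intM, symmetric])
  also have "\<dots> = expectation (\<lambda>\<omega>. X 1 \<omega> $ i * X 1 \<omega> $ j)" by simp
  also have "\<dots> = integral\<^sup>L (distr M borel (X 1)) (\<lambda>x. x $ i * x $ j)"
    by (rule integral_distr[symmetric]) measurable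
  also have "\<dots> = integral\<^sup>L (distr M borel (X t)) (\<lambda>x. x $ i * x $ j)"
  proof -
    have "distr M borel (X t) = distr M borel (X 1)" using ident t by blast
    then show ?thesis by (simp only:)
  qed
  also have "\<dots> = expectation (\<lambda>\<omega>. X t \<omega> $ i * X t \<omega> $ j)"
    by (rule integral_distr) measurable
  finally show "S $ i $ j = expectation (\<lambda>\<omega>. X t \<omega> $ i * X t \<omega> $ j)" .
qed



lemma entry_bound:
  fixes x :: "real^'p" assumes "norm x \<le> B"
  shows "\<bar>x $ i * x $ j\<bar> \<le> B * B"
proof -
  have "\<bar>x $ i\<bar> \<le> B" "\<bar>x $ j\<bar> \<le> B" using component_le_norm_cart[of x] assms by (meson order_trans)+
  then show ?thesis unfolding abs_mult by (intro mult_mono) auto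
qed

lemma (in prob_space) generic:
  fixes X :: "nat \<Rightarrow> 'a \<Rightarrow> real^'p" and v0 :: "'a \<Rightarrow> real^'p" and V :: "nat \<Rightarrow> 'a \<Rightarrow> real^'p"
    and S :: "real^'p^'p"
  assumes indep: "indep_vars (\<lambda>_. borel) (\<lambda>t. if t = 0 then v0 else X t) UNIV"
    and ident: "\<forall>t\<ge>1. distr M borel (X t) = distr M borel (X 1)"
    and bounded: "\<forall>t\<ge>1. AE \<omega> in M. norm (X t \<omega>) \<le> B"
    and cov: "S = expectation (\<lambda>\<omega>. \<chi> i j. X 1 \<omega> $ i * X 1 \<omega> $ j)"
    and eigs: "ordered_eigenvalues S lam"
    and gap: "lam 0 > lam 1"
    and v1: "norm v1 = 1" and v1e: "S *v v1 = lam 0 *\<^sub>R v1"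
    and rho: "rho = lam 0 - lam 1"
    and eta_pos: "\<forall>t\<ge>1. eta t > 0"
    and dim: "CARD('p) \<ge> 2"
    and t: "t \<ge> 1"
    and Vm: "V (t - 1) \<in> borel_measurable (nat_filtration M (\<lambda>i. if i = 0 then v0 else X i) (t - 1))"
    and Vnz: "\<forall>\<omega>\<in>space M. V (t - 1) \<omega> \<noteq> 0"
    and Vt: "\<forall>\<omega>\<in>space M. norm (X t \<omega>) \<le> B \<longrightarrow>
       sin2 (V t \<omega>) v1 \<le> sin2 (V (t - 1) \<omega>) v1 + dterm v1 (eta t) (X t \<omega>) (V (t - 1) \<omega>) + R"
  shows "\<exists>Q :: 'a \<Rightarrow> real.
        Q \<in> borel_measurable (nat_filtration M (\<lambda>i. if i = 0 then v0 else X i) t) \<and>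
        integrable M Q \<and>
        (AE \<omega> in M. real_cond_exp M (nat_filtration M (\<lambda>i. if i = 0 then v0 else X i) (t - 1)) Q \<omega> = 0) \<and>
        (AE \<omega> in M. \<bar>Q \<omega>\<bar> \<le> 8 * B\<^sup>2 * eta t * sqrt (sin2 (V (t - 1) \<omega>) v1)) \<and>
        (AE \<omega> in M.
           sin2 (V t \<omega>) v1
             \<le> (1 - 2 * rho * eta t) * sin2 (V (t - 1) \<omega>) v1
               + 2 * rho * eta t * (sin2 (V (t - 1) \<omega>) v1)\<^sup>2
               + Q \<omega> + R)"
proof -
  define Z where "Z = (\<lambda>i. if i = 0 then v0 else X i)"
  define F where "F = nat_filtration M Z (t - 1)"
  define G where "G = nat_filtration M Z t"
  define W where "W = V (t - 1)"
  define e where "e = eta t"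
  have e0: "e > 0" using eta_pos t e_def by auto
  have Zm[measurable]: "Z i \<in> borel_measurable M" for i
    using indep unfolding indep_vars_def2 Z_def by auto
  have ZX: "Z t = X t" using t Z_def by simp
  have Xm[measurable]: "X t \<in> borel_measurable M" using Zm[of t] ZX by simp
  have Xm': "X s \<in> borel_measurable M" if "s \<ge> 1" for s using Zm[of s] that Z_def by simp
  note ff = nat_filtration_facts[where Z=Z and M=M, OF Zm]
  have XmG: "X t \<in> borel_measurable G" using ff(5)[of t t] ZX G_def by simp
  have subMF: "subalgebra M F" using ff(6) F_def by simp
  have subMG: "subalgebra M G" using ff(6) G_def by simp
  have subGF: "subalgebra G F" using ff(7)[of "t - 1" t] F_def G_def by simp
  have WmF[measurable]: "W \<in> borel_measurable F" using Vm W_def F_def Z_def by simp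
  have WmG: "W \<in> borel_measurable G" by (rule measurable_from_subalg[OF subGF WmF])
  have WmM[measurable]: "W \<in> borel_measurable M" by (rule measurable_from_subalg[OF subMF WmF])
  interpret sigma_finite_subalgebra M F
    by (rule finite_measure_subalgebra_is_sigma_finite)
       (simp add: finite_measure_subalgebra_def finite_measure_subalgebra_axioms_def subMF
          finite_measure_axioms)
  have Bt: "AE \<omega> in M. norm (X t \<omega>) \<le> B" using bounded t by simp
  have "AE \<omega> in M. 0 \<le> B" using Bt by eventually_elim (rule order_trans[OF norm_ge_zero])
  then have B0: "0 \<le> B" by simp
  define L where "L \<omega> = sin2 (W \<omega>) v1" for \<omega>
  have L01: "0 \<le> L \<omega>" "L \<omega> \<le> 1" for \<omega> unfolding L_def using sin2_ge0[OF v1] sin2_le1 by auto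
  have sqL: "sqrt (L \<omega>) \<le> 1" "0 \<le> sqrt (L \<omega>)" for \<omega> using L01[of \<omega>] by auto

  define D where "D \<omega> = dterm v1 e (X t \<omega>) (W \<omega>)" for \<omega>
  have DmG: "D \<in> borel_measurable G" unfolding D_def using XmG WmG by measurable
  have DmM[measurable]: "D \<in> borel_measurable M" unfolding D_def by measurable
  have Dbd: "\<bar>D \<omega>\<bar> \<le> 2 * e * B^2 * sqrt (L \<omega>)" if "\<omega> \<in> space M" "norm (X t \<omega>) \<le> B" for \<omega>
    unfolding D_def L_def using dterm_bound_gen[OF _ v1 that(2) e0] Vnz that(1) W_def by simp
  have Dbd1: "\<bar>D \<omega>\<bar> \<le> 2 * e * B^2" if "\<omega> \<in> space M" "norm (X t \<omega>) \<le> B" for \<omega>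
  proof -
    have "2 * e * B^2 * sqrt (L \<omega>) \<le> 2 * e * B^2 * 1"
      by (rule mult_left_mono[OF sqL(1)]) (use e0 in simp)
    then show ?thesis using Dbd[OF that] by simp
  qed
  have Dint: "integrable M D"
  proof (rule integrable_const_bound[where B="2 * e * B^2"])
    show "AE x in M. norm (D x) \<le> 2 * e * B^2"
      using AE_space Bt by eventually_elim (simp add: Dbd1)
  qed simp

  define g where "g i j \<omega> = X t \<omega> $ i * X t \<omega> $ j" for i j \<omega>
  define a where "a i j \<omega> = acoef v1 e (W \<omega>) i j" for i j \<omega>
  define h where "h v = (\<Sum>i\<in>UNIV. \<Sum>j\<in>UNIV. acoef v1 e v i j * S $ i $ j)" for v
  have gm[measurable]: "g i j \<in> borel_measurable M" for i j unfolding g_def by measurable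
  have am[measurable]: "a i j \<in> borel_measurable F" for i j unfolding a_def by measurable
  have amM[measurable]: "a i j \<in> borel_measurable M" for i j
    by (rule measurable_from_subalg[OF subMF am])
  have gint: "integrable M (g i j)" for i j
    unfolding g_def by (rule Sigma_entry(2)[OF Xm' ident bounded cov t])
  have gexp: "S $ i $ j = expectation (g i j)" for i j
    unfolding g_def by (rule Sigma_entry(1)[OF Xm' ident bounded cov t])
  have gbd: "\<bar>g i j \<omega>\<bar> \<le> B * B" if "norm (X t \<omega>) \<le> B" for i j \<omega>
    unfolding g_def by (rule entry_bound[OF that])
  have abd: "\<bar>a i j \<omega>\<bar> \<le> 4 * e" for i j \<omega> unfolding a_def by (rule acoef_bound[OF v1 e0])
  have agint: "integrable M (\<lambda>\<omega>. a i j \<omega> * g i j \<omega>)" for i j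
  proof (rule integrable_const_bound[where B="4 * e * (B * B)"])
    show "AE x in M. norm (a i j x * g i j x) \<le> 4 * e * (B * B)"
      using Bt
    proof eventually_elim
      case (elim x)
      show ?case unfolding real_norm_def abs_mult
        by (rule mult_mono) (use abd[of i j x] gbd[OF elim, of i j] in auto)
    qed
  qed simp
  have Dsum: "D = (\<lambda>\<omega>. \<Sum>i\<in>UNIV. \<Sum>j\<in>UNIV. a i j \<omega> * g i j \<omega>)"
    unfolding D_def a_def g_def by (rule ext) (rule dterm_acoef)

  have ce_g: "AE \<omega> in M. real_cond_exp M F (g i j) \<omega> = S $ i $ j" for i j
  proof -
    have e1: "g i j = (\<lambda>\<omega>. (\<lambda>x::real^'p. x $ i * x $ j) (Z t \<omega>))" unfolding g_def ZX ..
    have "AE \<omega> in M. real_cond_exp M F (\<lambda>\<omega>. (\<lambda>x::real^'p. x $ i * x $ j) (Z t \<omega>)) \<omega>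
            = expectation (\<lambda>\<omega>. (\<lambda>x::real^'p. x $ i * x $ j) (Z t \<omega>))"
    proof -
      have i1: "indep_vars (\<lambda>_. borel) Z UNIV" using indep Z_def by simp
      have i2: "integrable M (\<lambda>\<omega>. (\<lambda>x::real^'p. x $ i * x $ j) (Z t \<omega>))"
        using gint[of i j] unfolding e1 .
      show ?thesis unfolding F_def by (rule cond_exp_indep[OF i1 t _ i2]) measurable
    qed
    then show ?thesis using gexp e1 by simp
  qed
  have ce_a: "AE \<omega> in M. real_cond_exp M F (\<lambda>\<omega>. a i j \<omega> * g i j \<omega>) \<omega> = a i j \<omega> * real_cond_exp M F (g i j) \<omega>" for i j
    by (rule real_cond_exp_mult) (use agint in simp_all)
  have ce_in: "AE \<omega> in M. real_cond_exp M F (\<lambda>\<omega>. \<Sum>j\<in>UNIV. a i j \<omega> * g i j \<omega>) \<omega>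
      = (\<Sum>j\<in>UNIV. real_cond_exp M F (\<lambda>\<omega>. a i j \<omega> * g i j \<omega>) \<omega>)" for i
    by (rule real_cond_exp_sum) (rule agint)
  have ce_out: "AE \<omega> in M. real_cond_exp M F (\<lambda>\<omega>. \<Sum>i\<in>UNIV. \<Sum>j\<in>UNIV. a i j \<omega> * g i j \<omega>) \<omega>
      = (\<Sum>i\<in>UNIV. real_cond_exp M F (\<lambda>\<omega>. \<Sum>j\<in>UNIV. a i j \<omega> * g i j \<omega>) \<omega>)"
    by (rule real_cond_exp_sum) (use agint in auto)
  have all1: "AE \<omega> in M. \<forall>i\<in>UNIV. \<forall>j\<in>UNIV. real_cond_exp M F (g i j) \<omega> = S $ i $ j
      \<and> real_cond_exp M F (\<lambda>\<omega>. a i j \<omega> * g i j \<omega>) \<omega> = a i j \<omega> * real_cond_exp M F (g i j) \<omega>"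
    by (intro AE_finite_allI AE_conjI ce_g ce_a) auto
  have all2: "AE \<omega> in M. \<forall>i\<in>UNIV. real_cond_exp M F (\<lambda>\<omega>. \<Sum>j\<in>UNIV. a i j \<omega> * g i j \<omega>) \<omega>
      = (\<Sum>j\<in>UNIV. real_cond_exp M F (\<lambda>\<omega>. a i j \<omega> * g i j \<omega>) \<omega>)"
    by (intro AE_finite_allI ce_in) auto
  have ceD: "AE \<omega> in M. real_cond_exp M F D \<omega> = h (W \<omega>)"
    using ce_out all1 all2
  proof eventually_elim
    case (elim \<omega>)
    have "real_cond_exp M F D \<omega> = (\<Sum>i\<in>UNIV. \<Sum>j\<in>UNIV. real_cond_exp M F (\<lambda>\<omega>. a i j \<omega> * g i j \<omega>) \<omega>)"
      unfolding Dsum using elim(1) elim(3) by simp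
    also have "\<dots> = (\<Sum>i\<in>UNIV. \<Sum>j\<in>UNIV. a i j \<omega> * S $ i $ j)"
      using elim(2) by simp
    also have "\<dots> = h (W \<omega>)" unfolding h_def a_def ..
    finally show ?case .
  qed

  have hbd: "\<bar>h v\<bar> \<le> 2 * e * B^2 * sqrt (sin2 v v1)" if v: "v \<noteq> 0" for v
  proof -
    let ?c = "2 * e * B^2 * sqrt (sin2 v v1)"
    have bd: "AE \<omega> in M. \<bar>dterm v1 e (X t \<omega>) v\<bar> \<le> ?c"
      using Bt by eventually_elim (rule dterm_bound_gen[OF v v1 _ e0])
    have di: "integrable M (\<lambda>\<omega>. dterm v1 e (X t \<omega>) v)"
      by (rule integrable_const_bound[where B="?c"]) (use bd in simp_all)
    have "h v = (\<Sum>i\<in>UNIV. \<Sum>j\<in>UNIV. expectation (\<lambda>\<omega>. acoef v1 e v i j * g i j \<omega>))"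
      unfolding h_def gexp by simp
    also have "\<dots> = (\<Sum>i\<in>UNIV. expectation (\<lambda>\<omega>. \<Sum>j\<in>UNIV. acoef v1 e v i j * g i j \<omega>))"
      by (intro sum.cong refl Bochner_Integration.integral_sum[symmetric]) (use gint in simp)
    also have "\<dots> = expectation (\<lambda>\<omega>. \<Sum>i\<in>UNIV. \<Sum>j\<in>UNIV. acoef v1 e v i j * g i j \<omega>)"
      by (intro Bochner_Integration.integral_sum[symmetric]) (use gint in auto)
    also have "\<dots> = expectation (\<lambda>\<omega>. dterm v1 e (X t \<omega>) v)"
      unfolding g_def by (simp add: dterm_acoef)
    finally have hv: "h v = expectation (\<lambda>\<omega>. dterm v1 e (X t \<omega>) v)" .
    have "expectation (\<lambda>\<omega>. dterm v1 e (X t \<omega>) v) \<le> ?c"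
      by (rule integral_le_const[OF di]) (use bd in \<open>auto elim: eventually_mono\<close>)
    moreover have "- ?c \<le> expectation (\<lambda>\<omega>. dterm v1 e (X t \<omega>) v)"
      by (rule integral_ge_const[OF di]) (use bd in \<open>auto elim: eventually_mono\<close>)
    ultimately show ?thesis unfolding hv by linarith
  qed

  have hdrift: "h v \<le> - 2 * rho * e * sin2 v v1 * (1 - sin2 v v1)" if v: "v \<noteq> 0" for v
  proof -
    define u where "u = (1 / norm v) *\<^sub>R v"
    define c where "c = u \<bullet> v1"
    have u1: "norm u = 1" unfolding u_def by (rule unit_of_nonzero(1)[OF v])
    have Ls: "sin2 v v1 = 1 - c^2"
    proof -
      have "sin2 u v1 = 1 - c^2" using u1 v1 by (simp add: sin2_def c_def)
      then show ?thesis using unit_of_nonzero(3)[OF v, of v1] u_def by simp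
    qed
    have hv: "h v = 2 * e * (c^2 * (u \<bullet> (S *v u)) - c * (u \<bullet> (S *v v1)))"
      unfolding h_def acoef_Sigma Let_def u_def c_def ..
    have "u \<bullet> (S *v v1) = lam 0 * c" unfolding v1e c_def by simp
    then have hv2: "h v = 2 * e * c^2 * ((u \<bullet> (S *v u)) - lam 0)"
      unfolding hv by (simp add: algebra_simps power2_eq_square)
    have sb: "u \<bullet> (S *v u) - lam 0 \<le> - rho * (1 - c^2)"
      using spectral_bound[OF eigs dim gap v1 v1e u1] unfolding rho c_def by (simp add: algebra_simps)
    have "2 * e * c^2 * ((u \<bullet> (S *v u)) - lam 0) \<le> 2 * e * c^2 * (- rho * (1 - c^2))"
      by (rule mult_left_mono[OF sb]) (use e0 in simp)
    then show ?thesis unfolding hv2 Ls by (simp add: algebra_simps)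
  qed

  define Q where "Q \<omega> = D \<omega> - real_cond_exp M F D \<omega>" for \<omega>
  have ceint: "integrable M (real_cond_exp M F D)" by (rule real_cond_exp_int(1)[OF Dint])
  have QG: "Q \<in> borel_measurable G"
  proof -
    have "real_cond_exp M F D \<in> borel_measurable G"
      by (rule measurable_from_subalg[OF subGF borel_measurable_cond_exp])
    then show ?thesis unfolding Q_def using DmG by measurable
  qed
  have Qint: "integrable M Q" unfolding Q_def using Dint ceint by simp
  have Qce: "AE \<omega> in M. real_cond_exp M F Q \<omega> = 0"
  proof -
    have "AE \<omega> in M. real_cond_exp M F (\<lambda>x. D x - real_cond_exp M F D x) \<omega>
        = real_cond_exp M F D \<omega> - real_cond_exp M F (real_cond_exp M F D) \<omega>"
      by (rule real_cond_exp_diff[OF Dint ceint])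
    moreover have "AE \<omega> in M. real_cond_exp M F (real_cond_exp M F D) \<omega> = real_cond_exp M F D \<omega>"
      by (rule real_cond_exp_F_meas[OF ceint borel_measurable_cond_exp])
    ultimately show ?thesis unfolding Q_def[abs_def] by eventually_elim simp
  qed
  have Qbd: "AE \<omega> in M. \<bar>Q \<omega>\<bar> \<le> 8 * B\<^sup>2 * eta t * sqrt (sin2 (V (t - 1) \<omega>) v1)"
    using AE_space Bt ceD
  proof eventually_elim
    case (elim \<omega>)
    have Wnz: "W \<omega> \<noteq> 0" using Vnz elim(1) W_def by simp
    have "\<bar>Q \<omega>\<bar> \<le> \<bar>D \<omega>\<bar> + \<bar>h (W \<omega>)\<bar>" unfolding Q_def elim(3) by simp
    also have "\<dots> \<le> 2 * e * B^2 * sqrt (L \<omega>) + 2 * e * B^2 * sqrt (L \<omega>)"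
      using Dbd[OF elim(1,2)] hbd[OF Wnz] unfolding L_def by linarith
    also have "\<dots> \<le> 8 * B\<^sup>2 * e * sqrt (L \<omega>)"
      using e0 sqL(2)[of \<omega>] by (simp add: algebra_simps)
    finally show ?case unfolding L_def W_def e_def .
  qed
  have Qmain: "AE \<omega> in M.
           sin2 (V t \<omega>) v1
             \<le> (1 - 2 * rho * eta t) * sin2 (V (t - 1) \<omega>) v1
               + 2 * rho * eta t * (sin2 (V (t - 1) \<omega>) v1)\<^sup>2
               + Q \<omega> + R"
    using AE_space Bt ceD
  proof eventually_elim
    case (elim \<omega>)
    have Wnz: "W \<omega> \<noteq> 0" using Vnz elim(1) W_def by simp
    have "sin2 (V t \<omega>) v1 \<le> L \<omega> + D \<omega> + R"
      using Vt elim(1,2) unfolding L_def D_def W_def e_def by simp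
    also have "D \<omega> = Q \<omega> + h (W \<omega>)" unfolding Q_def elim(3) by simp
    also have "h (W \<omega>) \<le> - 2 * rho * e * L \<omega> * (1 - L \<omega>)"
      using hdrift[OF Wnz] L_def by simp
    finally show ?case unfolding L_def W_def e_def by (simp add: algebra_simps power2_eq_square)
  qed
  show ?thesis
    using QG Qint Qce Qbd Qmain unfolding G_def F_def Z_def by blast
qed



theorem proposition4:
  fixes M :: "'a measure"
    and X :: "nat \<Rightarrow> 'a \<Rightarrow> real^'p"
    and v0 :: "'a \<Rightarrow> real^'p"
    and eta :: "nat \<Rightarrow> real"
    and B :: real
    and Sigma :: "real^'p^'p"
    and lam :: "nat \<Rightarrow> real"
    and v1 :: "real^'p"
    and rho :: real
  assumes prob: "prob_space M"
    and dim: "CARD('p) \<ge> 2"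
    and indep: "prob_space.indep_vars M (\<lambda>_. borel) (\<lambda>t. if t = 0 then v0 else X t) UNIV"
    and ident: "\<forall>t\<ge>1. distr M borel (X t) = distr M borel (X 1)"
    and centered: "\<forall>t\<ge>1. prob_space.expectation M (X t) = 0"
    and bounded: "\<forall>t\<ge>1. AE \<omega> in M. norm (X t \<omega>) \<le> B"
    and cov: "Sigma = prob_space.expectation M (\<lambda>\<omega>. \<chi> i j. X 1 \<omega> $ i * X 1 \<omega> $ j)"
    and eigs: "ordered_eigenvalues Sigma lam"
    and gap: "lam 0 > lam 1"
    and v1: "norm v1 = 1" "Sigma *v v1 = lam 0 *\<^sub>R v1"
    and rho: "rho = lam 0 - lam 1"
    and v0_unit: "\<forall>\<omega>\<in>space M. norm (v0 \<omega>) = 1"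
    and eta_pos: "\<forall>t\<ge>1. eta t > 0"
  shows
    "(\<forall>t\<ge>1. \<exists>Q :: 'a \<Rightarrow> real.
        Q \<in> borel_measurable (nat_filtration M (\<lambda>i. if i = 0 then v0 else X i) t) \<and>
        integrable M Q \<and>
        (AE \<omega> in M. real_cond_exp M (nat_filtration M (\<lambda>i. if i = 0 then v0 else X i) (t - 1)) Q \<omega> = 0) \<and>
        (AE \<omega> in M. \<bar>Q \<omega>\<bar> \<le> 8 * B\<^sup>2 * eta t * sqrt (sin2 (kras_iter eta X v0 (t - 1) \<omega>) v1)) \<and>
        (AE \<omega> in M.
           sin2 (kras_iter eta X v0 t \<omega>) v1
             \<le> (1 - 2 * rho * eta t) * sin2 (kras_iter eta X v0 (t - 1) \<omega>) v1
               + 2 * rho * eta t * (sin2 (kras_iter eta X v0 (t - 1) \<omega>) v1)\<^sup>2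
               + Q \<omega> + 4 * B ^ 4 * (eta t)\<^sup>2))
   \<and>
    (\<forall>t\<ge>1. \<exists>Q :: 'a \<Rightarrow> real.
        Q \<in> borel_measurable (nat_filtration M (\<lambda>i. if i = 0 then v0 else X i) t) \<and>
        integrable M Q \<and>
        (AE \<omega> in M. real_cond_exp M (nat_filtration M (\<lambda>i. if i = 0 then v0 else X i) (t - 1)) Q \<omega> = 0) \<and>
        (AE \<omega> in M. \<bar>Q \<omega>\<bar> \<le> 8 * B\<^sup>2 * eta t * sqrt (sin2 (oja_iter eta X v0 (t - 1) \<omega>) v1)) \<and>
        (AE \<omega> in M.
           sin2 (oja_iter eta X v0 t \<omega>) v1
             \<le> (1 - 2 * rho * eta t) * sin2 (oja_iter eta X v0 (t - 1) \<omega>) v1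
               + 2 * rho * eta t * (sin2 (oja_iter eta X v0 (t - 1) \<omega>) v1)\<^sup>2
               + Q \<omega> + (5 * B ^ 4 + 2 * eta t * B ^ 6) * (eta t)\<^sup>2))"
proof -
  interpret prob_space M by (rule prob)
  define Z where "Z = (\<lambda>i. if i = 0 then v0 else X i)"
  have Zm: "Z i \<in> borel_measurable M" for i
    using indep unfolding indep_vars_def2 Z_def by auto
  note ff = nat_filtration_facts[where Z=Z and M=M, OF Zm]
  have XmF[measurable]: "X (Suc s) \<in> borel_measurable (nat_filtration M Z (Suc s))" for s
    using ff(5)[of "Suc s" "Suc s"] Z_def by simp
  have v0F: "v0 \<in> borel_measurable (nat_filtration M Z 0)"
    using ff(5)[of 0 0] Z_def by simp
  have lift: "f \<in> borel_measurable (nat_filtration M Z s) \<Longrightarrow> f \<in> borel_measurable (nat_filtration M Z (Suc s))"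
    for f :: "'a \<Rightarrow> real^'p" and s
    by (rule measurable_from_subalg[OF ff(7)]) auto
  have Km: "kras_iter eta X v0 s \<in> borel_measurable (nat_filtration M Z s)" for s
  proof (induction s)
    case 0
    have "kras_iter eta X v0 0 = v0" by (rule ext) simp
    then show ?case using v0F by simp
  next
    case (Suc s)
    have e: "kras_iter eta X v0 (Suc s) = (\<lambda>\<omega>. kras_step (eta (Suc s)) (X (Suc s) \<omega>) (kras_iter eta X v0 s \<omega>))"
      by (rule ext) simp
    have [measurable]: "kras_iter eta X v0 s \<in> borel_measurable (nat_filtration M Z (Suc s))"
      by (rule lift[OF Suc.IH])
    show ?case unfolding e by measurable
  qed
  have Om: "oja_iter eta X v0 s \<in> borel_measurable (nat_filtration M Z s)" for s
  proof (induction s)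
    case 0
    have "oja_iter eta X v0 0 = v0" by (rule ext) simp
    then show ?case using v0F by simp
  next
    case (Suc s)
    have e: "oja_iter eta X v0 (Suc s) = (\<lambda>\<omega>. oja_step (eta (Suc s)) (X (Suc s) \<omega>) (oja_iter eta X v0 s \<omega>))"
      by (rule ext) simp
    have [measurable]: "oja_iter eta X v0 s \<in> borel_measurable (nat_filtration M Z (Suc s))"
      by (rule lift[OF Suc.IH])
    show ?case unfolding e by measurable
  qed
  have es: "eta (Suc s) > 0" for s using eta_pos by simp
  have Knz: "\<forall>\<omega>\<in>space M. kras_iter eta X v0 s \<omega> \<noteq> 0" for s
  proof (induction s)
    case 0 then show ?case using v0_unit by auto
  next
    case (Suc s) then show ?case
      using kras_gen(2)[OF _ v1(1) order_refl es] by simp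
  qed
  have Onz: "\<forall>\<omega>\<in>space M. oja_iter eta X v0 s \<omega> \<noteq> 0" for s
  proof (induction s)
    case 0 then show ?case using v0_unit by auto
  next
    case (Suc s) then show ?case
      using oja_gen(2)[OF _ v1(1) order_refl es] by simp
  qed
  show ?thesis
  proof (intro conjI allI impI)
    fix t :: nat assume t: "t \<ge> 1"
    then obtain s where ts: "t = Suc s" by (cases t) auto
    have Vt: "\<forall>\<omega>\<in>space M. norm (X t \<omega>) \<le> B \<longrightarrow>
       sin2 (kras_iter eta X v0 t \<omega>) v1 \<le> sin2 (kras_iter eta X v0 (t - 1) \<omega>) v1
         + dterm v1 (eta t) (X t \<omega>) (kras_iter eta X v0 (t - 1) \<omega>) + 4 * B ^ 4 * (eta t)\<^sup>2"
    proof (intro ballI impI)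
      fix \<omega> assume w: "\<omega> \<in> space M" and x: "norm (X t \<omega>) \<le> B"
      have "sin2 (kras_iter eta X v0 t \<omega>) v1 \<le> sin2 (kras_iter eta X v0 s \<omega>) v1
         + dterm v1 (eta t) (X t \<omega>) (kras_iter eta X v0 s \<omega>) + (eta t)^2 * B^4"
        unfolding ts using kras_gen(1)[OF _ v1(1) x[unfolded ts] es] Knz w by simp
      moreover have "(eta t)^2 * B^4 \<le> 4 * B ^ 4 * (eta t)\<^sup>2" by simp
      ultimately have "sin2 (kras_iter eta X v0 t \<omega>) v1 \<le> sin2 (kras_iter eta X v0 s \<omega>) v1
         + dterm v1 (eta t) (X t \<omega>) (kras_iter eta X v0 s \<omega>) + 4 * B ^ 4 * (eta t)\<^sup>2"
        by linarith
      then show "sin2 (kras_iter eta X v0 t \<omega>) v1 \<le> sin2 (kras_iter eta X v0 (t - 1) \<omega>) v1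
         + dterm v1 (eta t) (X t \<omega>) (kras_iter eta X v0 (t - 1) \<omega>) + 4 * B ^ 4 * (eta t)\<^sup>2"
        using ts by simp
    qed
    show "\<exists>Q :: 'a \<Rightarrow> real.
        Q \<in> borel_measurable (nat_filtration M (\<lambda>i. if i = 0 then v0 else X i) t) \<and>
        integrable M Q \<and>
        (AE \<omega> in M. real_cond_exp M (nat_filtration M (\<lambda>i. if i = 0 then v0 else X i) (t - 1)) Q \<omega> = 0) \<and>
        (AE \<omega> in M. \<bar>Q \<omega>\<bar> \<le> 8 * B\<^sup>2 * eta t * sqrt (sin2 (kras_iter eta X v0 (t - 1) \<omega>) v1)) \<and>
        (AE \<omega> in M.
           sin2 (kras_iter eta X v0 t \<omega>) v1
             \<le> (1 - 2 * rho * eta t) * sin2 (kras_iter eta X v0 (t - 1) \<omega>) v1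
               + 2 * rho * eta t * (sin2 (kras_iter eta X v0 (t - 1) \<omega>) v1)\<^sup>2
               + Q \<omega> + 4 * B ^ 4 * (eta t)\<^sup>2)"
      by (rule generic[OF indep ident bounded cov eigs gap v1(1) v1(2) rho eta_pos dim t])
         (use Km[of "t - 1"] Knz Vt Z_def in simp_all)
  next
    fix t :: nat assume t: "t \<ge> 1"
    then obtain s where ts: "t = Suc s" by (cases t) auto
    have Vt: "\<forall>\<omega>\<in>space M. norm (X t \<omega>) \<le> B \<longrightarrow>
       sin2 (oja_iter eta X v0 t \<omega>) v1 \<le> sin2 (oja_iter eta X v0 (t - 1) \<omega>) v1
         + dterm v1 (eta t) (X t \<omega>) (oja_iter eta X v0 (t - 1) \<omega>) + (5 * B ^ 4 + 2 * eta t * B ^ 6) * (eta t)\<^sup>2"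
    proof (intro ballI impI)
      fix \<omega> assume w: "\<omega> \<in> space M" and x: "norm (X t \<omega>) \<le> B"
      show "sin2 (oja_iter eta X v0 t \<omega>) v1 \<le> sin2 (oja_iter eta X v0 (t - 1) \<omega>) v1
         + dterm v1 (eta t) (X t \<omega>) (oja_iter eta X v0 (t - 1) \<omega>) + (5 * B ^ 4 + 2 * eta t * B ^ 6) * (eta t)\<^sup>2"
        unfolding ts using oja_gen(1)[OF _ v1(1) x[unfolded ts] es] Onz w by simp
    qed
    show "\<exists>Q :: 'a \<Rightarrow> real.
        Q \<in> borel_measurable (nat_filtration M (\<lambda>i. if i = 0 then v0 else X i) t) \<and>
        integrable M Q \<and>
        (AE \<omega> in M. real_cond_exp M (nat_filtration M (\<lambda>i. if i = 0 then v0 else X i) (t - 1)) Q \<omega> = 0) \<and>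
        (AE \<omega> in M. \<bar>Q \<omega>\<bar> \<le> 8 * B\<^sup>2 * eta t * sqrt (sin2 (oja_iter eta X v0 (t - 1) \<omega>) v1)) \<and>
        (AE \<omega> in M.
           sin2 (oja_iter eta X v0 t \<omega>) v1
             \<le> (1 - 2 * rho * eta t) * sin2 (oja_iter eta X v0 (t - 1) \<omega>) v1
               + 2 * rho * eta t * (sin2 (oja_iter eta X v0 (t - 1) \<omega>) v1)\<^sup>2
               + Q \<omega> + (5 * B ^ 4 + 2 * eta t * B ^ 6) * (eta t)\<^sup>2)"
      by (rule generic[OF indep ident bounded cov eigs gap v1(1) v1(2) rho eta_pos dim t])
         (use Om[of "t - 1"] Onz Vt Z_def in simp_all)
  qed
qed


end
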